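(* Let $A$ be a semiprime non-commutative associative algebra over $\Phi$ with center $Z$. Then: (i) $\mathrm{Der}(A)/I_Z$ is a strongly non-degenerate Lie algebra; (ii) if $Z$ contains no non-zero associative ideals of $A$ (in particular, if $A$ is prime), then $\mathrm{Der}(A)$ is a strongly non-degenerate Lie algebra.
   Context: $\Phi$ is a unital commutative ring in which $2$ and $3$ are invertible; all algebras are $\Phi$-modules. $\mathrm{Der}(A)$ is the Lie algebra (under $[\delta,\mu]=\delta\mu-\mu\delta$) of all associative derivations of $A$. $Z$ is the center of $A$ and $I_Z=\{\delta\in\mathrm{Der}(A): \delta(A)\subseteq Z\}$. An element $x$ of a Lie algebra $M$ is an absolute zero divisor if $[x,[x,M]]=0$; $M$ is strongly non-degenerate if it has no non-zero absolute zero divisors. *)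

theory Defs
  imports Main
begin

text \<open>An associative (not necessarily unital) algebra over a commutative unital ring
  of scalars 'k: the carrier is the whole type 'a (a non-unital ring, class ring),
  and smul is the scalar action making it a 'k-module with bilinear multiplication.\<close>

definition assoc_algebra :: "('k::comm_ring_1 \<Rightarrow> 'a::ring \<Rightarrow> 'a) \<Rightarrow> bool" where
  "assoc_algebra smul \<longleftrightarrow>
     (\<forall>c x y. smul c (x + y) = smul c x + smul c y) \<and>
     (\<forall>c d x. smul (c + d) x = smul c x + smul d x) \<and>
     (\<forall>c d x. smul (c * d) x = smul c (smul d x)) \<and>
     (\<forall>x. smul 1 x = x) \<and>
     (\<forall>c x y. smul c (x * y) = smul c x * y) \<and>
     (\<forall>c x y. smul c (x * y) = x * smul c y)"

definition two_three_invertible :: "'k::comm_ring_1 itself \<Rightarrow> bool" where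
  "two_three_invertible _ \<longleftrightarrow> (\<exists>u::'k. 2 * u = 1) \<and> (\<exists>v::'k. 3 * v = 1)"

definition alg_ideal :: "('k \<Rightarrow> 'a::ring \<Rightarrow> 'a) \<Rightarrow> 'a set \<Rightarrow> bool" where
  "alg_ideal smul I \<longleftrightarrow> 0 \<in> I \<and> (\<forall>x\<in>I. \<forall>y\<in>I. x + y \<in> I) \<and> (\<forall>x\<in>I. - x \<in> I) \<and>
     (\<forall>c. \<forall>x\<in>I. smul c x \<in> I) \<and> (\<forall>x\<in>I. \<forall>a. a * x \<in> I \<and> x * a \<in> I)"

text \<open>Semiprime: no non-zero ideal with zero square (I^2 = 0 iff all products vanish).\<close>
definition semiprime :: "('k \<Rightarrow> 'a::ring \<Rightarrow> 'a) \<Rightarrow> bool" where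
  "semiprime smul \<longleftrightarrow>
     (\<forall>I. alg_ideal smul I \<and> (\<forall>x\<in>I. \<forall>y\<in>I. x * y = 0) \<longrightarrow> I = {0})"

definition noncommutative :: "'a::ring itself \<Rightarrow> bool" where
  "noncommutative _ \<longleftrightarrow> (\<exists>x y::'a. x * y \<noteq> y * x)"

definition center :: "'a::ring set" where
  "center = {z. \<forall>x. z * x = x * z}"

definition Der :: "('k \<Rightarrow> 'a::ring \<Rightarrow> 'a) \<Rightarrow> ('a \<Rightarrow> 'a) set" where
  "Der smul = {d. (\<forall>x y. d (x + y) = d x + d y) \<and> (\<forall>c x. d (smul c x) = smul c (d x)) \<and>
                  (\<forall>x y. d (x * y) = d x * y + x * d y)}"

definition lie_br :: "('a::ring \<Rightarrow> 'a) \<Rightarrow> ('a \<Rightarrow> 'a) \<Rightarrow> ('a \<Rightarrow> 'a)" where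
  "lie_br d m = (\<lambda>x. d (m x) - m (d x))"

definition I_Z :: "('k \<Rightarrow> 'a::ring \<Rightarrow> 'a) \<Rightarrow> ('a \<Rightarrow> 'a) set" where
  "I_Z smul = {d \<in> Der smul. range d \<subseteq> center}"

text \<open>Der(A)/I_Z strongly non-degenerate: the coset of d is an absolute zero divisor
  iff [d,[d,m]] \<in> I_Z for all m \<in> Der(A); it must then be zero, i.e. d \<in> I_Z.\<close>
definition quot_strongly_nondeg :: "('k \<Rightarrow> 'a::ring \<Rightarrow> 'a) \<Rightarrow> bool" where
  "quot_strongly_nondeg smul \<longleftrightarrow>
     (\<forall>d \<in> Der smul. (\<forall>m \<in> Der smul. lie_br d (lie_br d m) \<in> I_Z smul) \<longrightarrow> d \<in> I_Z smul)"

definition Der_strongly_nondeg :: "('k \<Rightarrow> 'a::ring \<Rightarrow> 'a) \<Rightarrow> bool" where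
  "Der_strongly_nondeg smul \<longleftrightarrow>
     (\<forall>d \<in> Der smul. (\<forall>m \<in> Der smul. lie_br d (lie_br d m) = (\<lambda>_. 0)) \<longrightarrow> d = (\<lambda>_. 0))"

end

theory Submission imports Defs begin

definition cm :: "'a::ring \<Rightarrow> 'a \<Rightarrow> 'a" where "cm a b = a*b - b*a"

definition gen_ideal :: "('k \<Rightarrow> 'a::ring \<Rightarrow> 'a) \<Rightarrow> 'a set \<Rightarrow> 'a set" where
  "gen_ideal smul S = \<Inter>{I. alg_ideal smul I \<and> S \<subseteq> I}"

lemma cen_comm: "c \<in> center \<Longrightarrow> c * x = x * c"
  by (simp add: center_def)

lemma cen_I: "(\<And>x. c * x = x * c) \<Longrightarrow> c \<in> center"
  by (simp add: center_def)

lemma cen_mult: "c \<in> center \<Longrightarrow> d \<in> center \<Longrightarrow> c * d \<in> center"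
  unfolding center_def
proof (clarify)
  fix x assume c: "\<forall>x. c * x = x * c" and d: "\<forall>x. d * x = x * d"
  have "c * d * x = c * (x * d)" using d by (simp add: mult.assoc)
  also have "\<dots> = x * (c * d)" using c by (metis mult.assoc)
  finally show "c * d * x = x * (c * d)" .
qed

lemma cm_cen: "c \<in> center \<Longrightarrow> cm c x = 0"
  using cen_comm[of c x] by (simp add: cm_def)

lemma cm_zero_cen: "(\<And>x. cm c x = 0) \<Longrightarrow> c \<in> center"
  by (simp add: cm_def center_def)

lemma cm_mult: "cm (a*b) r = a * cm b r + cm a r * b"
  by (simp add: cm_def algebra_simps)

lemma cm_add: "cm (a+b) r = cm a r + cm b r"
  by (simp add: cm_def algebra_simps)

lemma cm_cen_left: "c \<in> center \<Longrightarrow> cm (c*b) r = c * cm b r"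
proof -
  assume c: "c \<in> center"
  have "r * (c * b) = c * (r * b)" using cen_comm[OF c, of r] by (metis mult.assoc)
  thus ?thesis by (simp add: cm_def algebra_simps)
qed

lemma cm_cen_right: "c \<in> center \<Longrightarrow> cm (b*c) r = c * cm b r"
proof -
  assume c: "c \<in> center"
  have "b * c * r = c * (b * r)" using cen_comm[OF c] by (metis mult.assoc)
  moreover have "r * (b * c) = c * (r * b)" using cen_comm[OF c] by (metis mult.assoc)
  ultimately show ?thesis by (simp add: cm_def algebra_simps)
qed

lemma cen_swap: "c \<in> center \<Longrightarrow> a * (c * b) = c * (a * b)"
  using cen_comm by (metis mult.assoc)

context
  fixes smul :: "'k::comm_ring_1 \<Rightarrow> 'a::ring \<Rightarrow> 'a"
  assumes alg: "assoc_algebra smul"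
begin

lemma smul_add: "smul c (x + y) = smul c x + smul c y"
  using alg unfolding assoc_algebra_def by blast
lemma smul_ml: "smul c (x * y) = smul c x * y"
  using alg unfolding assoc_algebra_def by blast
lemma smul_mr: "smul c (x * y) = x * smul c y"
  using alg unfolding assoc_algebra_def by blast
lemma smul_0: "smul c 0 = 0"
proof -
  have "smul c (0+0) = smul c 0 + smul c 0" by (rule smul_add)
  thus ?thesis by simp
qed
lemma smul_neg: "smul c (- x) = - smul c x"
proof -
  have "smul c (x + - x) = smul c x + smul c (-x)" by (rule smul_add)
  hence "smul c x + smul c (-x) = 0" by (simp add: smul_0)
  hence "- smul c x = smul c (-x)" by (rule minus_unique)
  thus ?thesis by simp
qed
lemma smul_diff: "smul c (x - y) = smul c x - smul c y"
  using smul_add[of c x "- y"] by (simp add: smul_neg)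
lemma smul_plus: "smul (c + d) x = smul c x + smul d x"
  using alg unfolding assoc_algebra_def by blast
lemma smul_one: "smul 1 x = x"
  using alg unfolding assoc_algebra_def by blast

lemma ideal_Inter: "(\<And>I. I \<in> F \<Longrightarrow> alg_ideal smul I) \<Longrightarrow> alg_ideal smul (\<Inter>F)"
  unfolding alg_ideal_def Inter_iff
  apply (intro conjI ballI allI)
  apply (simp_all only: Inter_iff)
  done

lemma gen_ideal_ideal: "alg_ideal smul (gen_ideal smul (S::'a set))"
  unfolding gen_ideal_def by (rule ideal_Inter) blast

lemma gen_ideal_sub: "(S::'a set) \<subseteq> gen_ideal smul S"
  unfolding gen_ideal_def by blast

lemma gen_ideal_least: "alg_ideal smul (I::'a set) \<Longrightarrow> S \<subseteq> I \<Longrightarrow> gen_ideal smul S \<subseteq> I"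
  unfolding gen_ideal_def by blast

lemma SP_gen:
  fixes S :: "'a set"
  assumes sp: "semiprime smul"
    and h: "\<And>u v r. u \<in> S \<Longrightarrow> v \<in> S \<Longrightarrow> u * v = 0 \<and> u * r * v = 0"
    and u: "u \<in> S"
  shows "u = 0"
proof -
  define J where "J = gen_ideal smul S"
  define L2 where "L2 = {y. \<forall>u\<in>S. u * y = 0 \<and> (\<forall>r. u * r * y = 0)}"
  have L2: "alg_ideal smul L2"
    unfolding alg_ideal_def L2_def
  proof (intro conjI ballI allI)
    fix x a assume x: "x \<in> {y. \<forall>u\<in>S. u * y = 0 \<and> (\<forall>r. u * r * y = 0)}"
    show "a * x \<in> {y. \<forall>u\<in>S. u * y = 0 \<and> (\<forall>r. u * r * y = 0)}"
      unfolding mem_Collect_eq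
    proof (intro ballI conjI allI)
      fix u r assume u: "u \<in> S"
      have "u * a * x = 0" "u * (r * a) * x = 0" using x u by blast+
      thus "u * (a * x) = 0" "u * r * (a * x) = 0" by (simp_all add: mult.assoc)
    qed
    show "x * a \<in> {y. \<forall>u\<in>S. u * y = 0 \<and> (\<forall>r. u * r * y = 0)}"
      using x by (simp add: mult.assoc[symmetric])
  next
    fix c x assume x: "x \<in> {y. \<forall>u\<in>S. u * y = 0 \<and> (\<forall>r. u * r * y = 0)}"
    show "smul c x \<in> {y. \<forall>u\<in>S. u * y = 0 \<and> (\<forall>r. u * r * y = 0)}"
      using x by (simp add: smul_mr[symmetric] smul_0)
  next
    fix x y assume x: "x \<in> {y. \<forall>u\<in>S. u * y = 0 \<and> (\<forall>r. u * r * y = 0)}"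
      and y: "y \<in> {y. \<forall>u\<in>S. u * y = 0 \<and> (\<forall>r. u * r * y = 0)}"
    show "x + y \<in> {y. \<forall>u\<in>S. u * y = 0 \<and> (\<forall>r. u * r * y = 0)}"
      using x y by (simp add: distrib_left)
  next
    fix x assume x: "x \<in> {y. \<forall>u\<in>S. u * y = 0 \<and> (\<forall>r. u * r * y = 0)}"
    show "- x \<in> {y. \<forall>u\<in>S. u * y = 0 \<and> (\<forall>r. u * r * y = 0)}"
      using x by simp
  qed simp
  have "S \<subseteq> L2" using h unfolding L2_def by blast
  hence JL2: "J \<subseteq> L2" unfolding J_def by (rule gen_ideal_least[OF L2])
  define L1 where "L1 = {x. \<forall>y\<in>J. x * y = 0}"
  have Jid: "alg_ideal smul J" unfolding J_def by (rule gen_ideal_ideal)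
  have L1: "alg_ideal smul L1"
    unfolding alg_ideal_def L1_def
  proof (intro conjI ballI allI)
    fix x a assume x: "x \<in> {x. \<forall>y\<in>J. x * y = 0}"
    show "a * x \<in> {x. \<forall>y\<in>J. x * y = 0}" using x by (simp add: mult.assoc)
    show "x * a \<in> {x. \<forall>y\<in>J. x * y = 0}"
      unfolding mem_Collect_eq
    proof
      fix y assume y: "y \<in> J"
      have "a * y \<in> J" using Jid y unfolding alg_ideal_def by blast
      hence "x * (a * y) = 0" using x by blast
      thus "x * a * y = 0" by (simp add: mult.assoc)
    qed
  next
    fix c x assume x: "x \<in> {x. \<forall>y\<in>J. x * y = 0}"
    show "smul c x \<in> {x. \<forall>y\<in>J. x * y = 0}" using x by (simp add: smul_ml[symmetric] smul_0)
  next
    fix x y assume x: "x \<in> {x. \<forall>y\<in>J. x * y = 0}" and y: "y \<in> {x. \<forall>y\<in>J. x * y = 0}"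
    show "x + y \<in> {x. \<forall>y\<in>J. x * y = 0}" using x y by (simp add: distrib_right)
  next
    fix x assume x: "x \<in> {x. \<forall>y\<in>J. x * y = 0}"
    show "- x \<in> {x. \<forall>y\<in>J. x * y = 0}" using x by simp
  qed simp
  have "S \<subseteq> L1" using JL2 unfolding L1_def L2_def by blast
  hence "J \<subseteq> L1" unfolding J_def by (rule gen_ideal_least[OF L1])
  hence "\<forall>x\<in>J. \<forall>y\<in>J. x * y = 0" unfolding L1_def by blast
  hence "alg_ideal smul J \<and> (\<forall>x\<in>J. \<forall>y\<in>J. x * y = 0)" using Jid by simp
  moreover have "alg_ideal smul J \<and> (\<forall>x\<in>J. \<forall>y\<in>J. x * y = 0) \<longrightarrow> J = {0}"
    using sp unfolding semiprime_def by (rule spec)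
  ultimately have "J = {0}" by (rule rev_mp)
  moreover have "u \<in> J" using u gen_ideal_sub[of S] unfolding J_def by (rule subsetD[rotated])
  ultimately show "u = 0" by simp
qed

lemma SP:
  fixes a :: 'a
  assumes sp: "semiprime smul" and h: "\<And>s. a * s * a = 0"
  shows "a = 0"
proof -
  have ra: "r * a = 0" for r
  proof (rule SP_gen[OF sp, of "{x. \<exists>r. x = r * a}"])
    fix u v t assume "u \<in> {x. \<exists>r. x = r * a}" "v \<in> {x. \<exists>r. x = r * a}"
    then obtain p q where "u = p * a" "v = q * a" by blast
    moreover have "p * a * (q * a) = p * (a * q * a)" by (simp add: mult.assoc)
    moreover have "p * a * t * (q * a) = p * (a * (t * q) * a)" by (simp add: mult.assoc)
    ultimately show "u * v = 0 \<and> u * t * v = 0" by (simp add: h)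
  qed auto
  show ?thesis
    by (rule SP_gen[OF sp, of "{a}"]) (auto simp: h ra)
qed


lemma cm_diff: "cm (a - b) r = cm a r - cm b r"
  unfolding cm_def by (simp add: algebra_simps)

lemma cen_add: "c \<in> center \<Longrightarrow> d \<in> center \<Longrightarrow> c + d \<in> center"
  unfolding center_def by (simp add: algebra_simps)

lemma SPc: assumes sp: "semiprime smul" and c: "c \<in> center" and h: "c * (c * u) = 0"
  shows "c * u = (0::'a)"
proof (rule SP[OF sp])
  fix s
  have "c * u * s * (c * u) = c * (c * u) * s * u"
    by (metis mult.assoc cen_comm[OF c])
  thus "c * u * s * (c * u) = 0" using h by simp
qed

lemma L2:
  assumes sp: "semiprime smul" and h: "\<And>x. cm b x \<in> center"
  shows "(b::'a) \<in> center"
proof (rule cm_zero_cen)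
  fix x
  define c where "c = cm b x"
  have c: "c \<in> center" using h c_def by simp
  have "cm b (x * b) = c * b" unfolding c_def cm_def by (simp add: algebra_simps)
  hence cb: "c * b \<in> center" using h by metis
  have cbr: "c * cm b r = 0" for r
  proof -
    have "c * b * r = r * (c * b)" using cb cen_comm by blast
    also have "\<dots> = c * (r * b)" by (metis mult.assoc cen_comm[OF c])
    finally show ?thesis unfolding cm_def by (simp add: algebra_simps)
  qed
  have "c * (c * (cm b x)) = 0" using cbr[of x] unfolding c_def by simp
  hence "c * cm b x = 0" by (rule SPc[OF sp c])
  hence "c * c = 0" unfolding c_def by simp
  show "cm b x = 0"
  proof -
    have "c = 0"
    proof (rule SP[OF sp])
      fix s
      have "c * s * c = s * (c * c)" using cen_comm[OF c, of s] by (simp add: mult.assoc)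
      thus "c * s * c = 0" using \<open>c * c = 0\<close> by simp
    qed
    thus ?thesis unfolding c_def .
  qed
qed

lemma Der_add: "D \<in> Der smul \<Longrightarrow> D (x + y) = D x + D y"
  unfolding Der_def by blast
lemma Der_mul: "D \<in> Der smul \<Longrightarrow> D (x * y) = D x * y + x * D y"
  unfolding Der_def by blast
lemma Der_smul: "D \<in> Der smul \<Longrightarrow> D (smul c x) = smul c (D x)"
  unfolding Der_def by blast
lemma Der_0: "D \<in> Der smul \<Longrightarrow> D 0 = 0"
  using Der_add[of D 0 0] by simp
lemma Der_neg: "D \<in> Der smul \<Longrightarrow> D (- x) = - D x"
proof -
  assume d: "D \<in> Der smul"
  have "D (x + - x) = D x + D (-x)" by (rule Der_add[OF d])
  hence "D x + D (-x) = 0" using Der_0[OF d] by simp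
  hence "- D x = D (-x)" by (rule minus_unique)
  thus ?thesis by simp
qed
lemma Der_diff: "D \<in> Der smul \<Longrightarrow> D (x - y) = D x - D y"
  using Der_add[of D x "- y"] Der_neg[of D y] by simp

lemma cm_Der: "cm a \<in> Der smul"
  unfolding Der_def cm_def
  by (auto simp: algebra_simps smul_diff smul_ml smul_mr[symmetric])

lemma lie_cm: "D \<in> Der smul \<Longrightarrow> lie_br D (cm a) = cm (D a)"
  unfolding lie_br_def cm_def
  by (rule ext) (simp add: Der_diff Der_mul algebra_simps)

lemma two_cancel:
  assumes tt: "two_three_invertible TYPE('k)" and h: "(x::'a) + x = 0" shows "x = 0"
proof -
  obtain u :: 'k where u: "2 * u = 1" using tt unfolding two_three_invertible_def by blast
  have uu: "u + u = 1" using u by (simp only: mult_2)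
  have "x = smul 1 x" by (rule smul_one[symmetric])
  also have "\<dots> = smul (u + u) x" by (simp only: uu)
  also have "\<dots> = smul u x + smul u x" by (rule smul_plus)
  also have "\<dots> = smul u (x + x)" by (rule smul_add[symmetric])
  also have "\<dots> = smul u 0" by (simp only: h)
  also have "\<dots> = 0" by (rule smul_0)
  finally show ?thesis .
qed

lemma three_cancel:
  assumes tt: "two_three_invertible TYPE('k)" and h: "(x::'a) + x + x = 0" shows "x = 0"
proof -
  obtain v :: 'k where v: "3 * v = 1" using tt unfolding two_three_invertible_def by blast
  have "(3::'k) * v = v + v + v" by (simp add: algebra_simps)
  hence vv: "v + v + v = 1" using v by simp
  have "x = smul 1 x" by (rule smul_one[symmetric])
  also have "\<dots> = smul (v + v + v) x" by (simp only: vv)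
  also have "\<dots> = smul v x + smul v x + smul v x" by (simp only: smul_plus)
  also have "\<dots> = smul v (x + x + x)" by (simp only: smul_add)
  also have "\<dots> = smul v 0" by (simp only: h)
  also have "\<dots> = 0" by (rule smul_0)
  finally show ?thesis .
qed

context
  fixes D :: "'a \<Rightarrow> 'a"
  assumes sp: "semiprime smul" and tt: "two_three_invertible TYPE('k)"
    and d: "D \<in> Der smul" and zc: "\<And>x. D (D x) \<in> center"
begin

lemma DZ: assumes c: "c \<in> center" shows "D c \<in> center"
proof (rule cen_I)
  fix r
  have "D (c * r) = D (r * c)" using cen_comm[OF c, of r] by simp
  hence "D c * r + c * D r = D r * c + r * D c" using Der_mul[OF d] by simp
  moreover have "c * D r = D r * c" using cen_comm[OF c] .
  ultimately show "D c * r = r * D c" by (metis add.commute add_right_cancel)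
qed

lemma D2mul: "D (D (x * y)) = D (D x) * y + (D x * D y + D x * D y) + x * D (D y)"
  by (simp add: Der_mul[OF d] Der_add[OF d] algebra_simps)

lemma star: "D (D x) * cm y r + (cm (D x * D y) r + cm (D x * D y) r) + D (D y) * cm x r = 0"
proof -
  have "0 = cm (D (D (x * y))) r" using cm_cen[OF zc] by simp
  also have "\<dots> = cm (D (D x) * y) r + (cm (D x * D y) r + cm (D x * D y) r) + cm (x * D (D y)) r"
    by (simp only: D2mul cm_add)
  also have "\<dots> = D (D x) * cm y r + (cm (D x * D y) r + cm (D x * D y) r) + D (D y) * cm x r"
    by (simp only: cm_cen_left[OF zc] cm_cen_right[OF zc])
  finally show ?thesis by simp
qed

lemma E1: assumes w: "w \<in> center"
  shows "(D w * cm (D x) r + D w * cm (D x) r) + D (D w) * cm x r = 0"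
proof -
  have "cm (D x * D w) r = D w * cm (D x) r" by (rule cm_cen_right[OF DZ[OF w]])
  thus ?thesis using star[of x w r] cm_cen[OF w] by simp
qed

lemma W: assumes w: "w \<in> center"
  shows "D (D w) * cm x r = 0" and "D w * cm (D x) r = 0"
proof -
  have a: "D (D w) * cm (D y) r = 0" for y
    using E1[OF w, of "D y" r] cm_cen[OF zc] by simp
  have "D (D w) * (D w * cm (D x) r + D w * cm (D x) r) + D (D w) * (D (D w) * cm x r) = 0"
    using E1[OF w, of x r] by (metis distrib_left mult_zero_right)
  moreover have "D (D w) * (D w * cm (D x) r) = 0"
    using cen_swap[OF zc, of "D w" w "cm (D x) r"] a by simp
  ultimately have "D (D w) * (D (D w) * cm x r) = 0" by (simp add: distrib_left)
  thus b: "D (D w) * cm x r = 0" by (rule SPc[OF sp zc])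
  show "D w * cm (D x) r = 0"
    by (rule two_cancel[OF tt]) (use E1[OF w, of x r] b in simp)
qed

lemma G: "D (D (D x)) * cm y r + (D (D x) * cm (D y) r + D (D x) * cm (D y) r)
    + D (D y) * cm (D x) r = 0"
  using star[of "D x" y r] cm_cen_left[OF zc, of x "D y" r] by simp

lemma D3: "D (D (D x)) * cm y r = 0"
proof -
  let ?t = "D (D (D x))"
  have t: "?t \<in> center" by (rule DZ[OF zc])
  have h1: "?t * cm (D y) r = 0" "?t * cm (D x) r = 0" using W(2)[OF zc] by auto
  have "?t * (D (D x) * cm (D y) r) = 0"
    using cen_swap[OF zc, of ?t x "cm (D y) r"] h1 by simp
  moreover have "?t * (D (D y) * cm (D x) r) = 0"
    using cen_swap[OF zc, of ?t y "cm (D x) r"] h1 by simp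
  moreover have "?t * (?t * cm y r) + (?t * (D (D x) * cm (D y) r) + ?t * (D (D x) * cm (D y) r))
    + ?t * (D (D y) * cm (D x) r) = 0"
    using G[of x y r] by (metis distrib_left mult_zero_right)
  ultimately have "?t * (?t * cm y r) = 0" by simp
  thus ?thesis by (rule SPc[OF sp t])
qed

lemma Z1: "D (D x) * cm (D y) r = 0"
proof -
  let ?p = "D (D x) * cm (D y) r" and ?q = "D (D y) * cm (D x) r"
  have 1: "?p + ?p + ?q = 0" using G[of x y r] D3[of x y r] by (simp add: add.assoc)
  have 2: "?q + ?q + ?p = 0" using G[of y x r] D3[of y x r] by (simp add: add.assoc)
  have "?p + ?p + ?p = (?p + ?p + ?q) + (?p + ?p + ?q) - (?q + ?q + ?p)"
    by (simp add: algebra_simps)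
  hence "?p + ?p + ?p = 0" using 1 2 by simp
  thus ?thesis by (rule three_cancel[OF tt])
qed

lemma Z2: "D (D x) * cm (D x * D y) r = 0"
proof -
  have "D (D x) * cm (D x * D y) r = D (D x) * (D x * cm (D y) r) + D (D x) * (cm (D x) r * D y)"
    by (simp add: cm_mult distrib_left)
  also have "\<dots> = D x * (D (D x) * cm (D y) r) + (D (D x) * cm (D x) r) * D y"
    using cen_swap[OF zc, of "D x" x "cm (D y) r"] by (simp add: mult.assoc)
  also have "\<dots> = 0" using Z1 by simp
  finally show ?thesis .
qed

lemma Z3: "D (D x) * cm x r = 0"
proof -
  have "D (D x) * (D (D x) * cm x r) + (D (D x) * cm (D x * D x) r + D (D x) * cm (D x * D x) r)
     + D (D x) * (D (D x) * cm x r) = 0"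
    using star[of x x r] by (metis distrib_left mult_zero_right)
  hence "D (D x) * (D (D x) * cm x r) + D (D x) * (D (D x) * cm x r) = 0" using Z2 by simp
  hence "D (D x) * (D (D x) * cm x r) = 0" by (rule two_cancel[OF tt])
  thus ?thesis by (rule SPc[OF sp zc])
qed

lemma Z4: "D (D x) * cm y r = 0"
proof -
  have "D (D (x + y)) * cm (x + y) r = 0" by (rule Z3)
  hence "(D (D x) + D (D y)) * (cm x r + cm y r) = 0" by (simp add: Der_add[OF d] cm_add)
  hence e: "D (D x) * cm y r + D (D y) * cm x r = 0"
    using Z3[of x r] Z3[of y r] by (simp add: algebra_simps)
  have "D (D x) * (D (D y) * cm x r) = 0"
    using cen_swap[OF zc, of "D (D x)" y "cm x r"] Z3[of x r] by simp
  moreover have "D (D x) * (D (D x) * cm y r) + D (D x) * (D (D y) * cm x r) = 0"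
    using e by (metis distrib_left mult_zero_right)
  ultimately have "D (D x) * (D (D x) * cm y r) = 0" by simp
  thus ?thesis by (rule SPc[OF sp zc])
qed

lemma DD_cen: "D x * D y \<in> center"
proof (rule cm_zero_cen)
  fix r
  have "cm (D x * D y) r + cm (D x * D y) r = 0" using star[of x y r] Z4 by simp
  thus "cm (D x * D y) r = 0" by (rule two_cancel[OF tt])
qed

lemma P9: "D x * D y * cm (D t) r = 0"
proof -
  have c: "D x * D (y * D t) \<in> center" by (rule DD_cen)
  have e: "D x * D (y * D t) = (D x * D y) * D t + D x * y * D (D t)"
    by (simp add: Der_mul[OF d] algebra_simps)
  have "0 = cm (D x * D (y * D t)) r" using cm_cen[OF c] by simp
  also have "\<dots> = (D x * D y) * cm (D t) r + D (D t) * cm (D x * y) r"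
    by (simp only: e cm_add cm_cen_left[OF DD_cen] cm_cen_right[OF zc])
  also have "\<dots> = (D x * D y) * cm (D t) r" using Z4 by simp
  finally show ?thesis by simp
qed

lemma P10: "D x * y * D s * cm (D t) r = 0"
proof -
  have "0 = D x * D (y * s) * cm (D t) r" using P9 by simp
  also have "\<dots> = (D x * D y) * s * cm (D t) r + D x * y * D s * cm (D t) r"
    by (simp add: Der_mul[OF d] algebra_simps)
  also have "(D x * D y) * s = s * (D x * D y)" using cen_comm[OF DD_cen] .
  finally show ?thesis using P9 by (simp add: mult.assoc)
qed

lemma P11: "D s * cm (D t) r = 0"
proof (rule SP[OF sp])
  fix a
  have "D s * cm (D t) r * a * (D s * cm (D t) r) = D s * (cm (D t) r * a) * D s * cm (D t) r"
    by (simp add: mult.assoc)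
  thus "D s * cm (D t) r * a * (D s * cm (D t) r) = 0" using P10 by simp
qed

lemma P12: "D s * a * cm (D t) r = 0"
proof -
  have "0 = D (s * a) * cm (D t) r" using P11 by simp
  also have "\<dots> = D s * a * cm (D t) r + s * (D a * cm (D t) r)"
    by (simp add: Der_mul[OF d] algebra_simps)
  finally show ?thesis using P11 by simp
qed

lemma D_cen: "D x \<in> center"
proof (rule cm_zero_cen)
  fix r
  show "cm (D x) r = 0"
  proof (rule SP[OF sp])
    fix a
    have "cm (D x) r * a * cm (D x) r = D x * (r * a) * cm (D x) r - r * (D x * a * cm (D x) r)"
      by (simp add: cm_def algebra_simps)
    thus "cm (D x) r * a * cm (D x) r = 0" using P12 by simp
  qed
qed

end
end

lemma cen_neg: "c \<in> center \<Longrightarrow> - c \<in> center"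
  unfolding center_def by simp

theorem theorem2p5:
  fixes smul :: "'k::comm_ring_1 \<Rightarrow> 'a::ring \<Rightarrow> 'a"
  assumes "two_three_invertible TYPE('k)"
    and "assoc_algebra smul"
    and "semiprime smul"
    and "noncommutative TYPE('a)"
  shows "quot_strongly_nondeg smul \<and>
         ((\<forall>I. alg_ideal smul I \<and> I \<subseteq> center \<longrightarrow> I = {0}) \<longrightarrow> Der_strongly_nondeg smul)"
proof -
  note tt = assms(1) and alg = assms(2) and sp = assms(3)
  have part1: "quot_strongly_nondeg smul"
    unfolding quot_strongly_nondeg_def
  proof (intro ballI impI)
    fix d assume d: "d \<in> Der smul" and h: "\<forall>m\<in>Der smul. lie_br d (lie_br d m) \<in> I_Z smul"
    have zc: "d (d a) \<in> center" for a
    proof -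
      have "lie_br d (lie_br d (cm a)) \<in> I_Z smul" using h cm_Der[OF alg, of a] by (rule bspec)
      hence "cm (d (d a)) \<in> I_Z smul" by (simp only: lie_cm[OF alg d])
      hence r: "range (cm (d (d a))) \<subseteq> center" unfolding I_Z_def by simp
      show ?thesis
      proof (rule L2[OF alg sp])
        fix x show "cm (d (d a)) x \<in> center" using r by (rule subsetD) (rule rangeI)
      qed
    qed
    have "range d \<subseteq> center" using D_cen[OF alg sp tt d zc] by blast
    thus "d \<in> I_Z smul" unfolding I_Z_def using d by blast
  qed

  have part2: "Der_strongly_nondeg smul" if H: "\<forall>I. alg_ideal smul I \<and> I \<subseteq> center \<longrightarrow> I = {0}"
    unfolding Der_strongly_nondeg_def
  proof (intro ballI impI)
    fix d assume d: "d \<in> Der smul" and h: "\<forall>m\<in>Der smul. lie_br d (lie_br d m) = (\<lambda>_. 0)"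
    have z0: "(\<lambda>_. 0::'a) \<in> I_Z smul"
      unfolding I_Z_def Der_def center_def by (auto simp: smul_0[OF alg])
    have "d \<in> I_Z smul" using part1 d h z0 unfolding quot_strongly_nondeg_def by metis
    hence dc: "d x \<in> center" for x unfolding I_Z_def by blast
    define T where "T = {a::'a. a \<in> center \<and> (\<forall>x y. a * cm x y = 0)}"
    have Tid: "alg_ideal smul T"
      unfolding alg_ideal_def
    proof (intro conjI ballI allI)
      show "0 \<in> T" unfolding T_def center_def by simp
    next
      fix a b assume a: "a \<in> T" and b: "b \<in> T"
      show "a + b \<in> T" using a b unfolding T_def by (auto intro: cen_add[OF alg] simp: distrib_right)
    next
      fix a assume a: "a \<in> T"
      show "- a \<in> T" using a unfolding T_def by (auto intro: cen_neg)
    next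
      fix c a assume a: "a \<in> T"
      have ac: "a \<in> center" and a0: "\<And>x y. a * cm x y = 0" using a unfolding T_def by auto
      have "smul c a * x = x * smul c a" for x
        by (metis smul_ml[OF alg] smul_mr[OF alg] cen_comm[OF ac])
      moreover have "smul c a * cm x y = 0" for x y
        by (metis smul_ml[OF alg] smul_0[OF alg] a0)
      ultimately show "smul c a \<in> T" unfolding T_def center_def by auto
    next
      fix a b assume a: "a \<in> T"
      have ac: "a \<in> center" and a0: "\<And>x y. a * cm x y = 0" using a unfolding T_def by auto
      have ab: "a * b \<in> center"
      proof (rule cen_I)
        fix x
        have "a * (b * x) = a * (x * b)" using a0[of b x] unfolding cm_def
          by (simp add: right_diff_distrib)
        moreover have "x * (a * b) = a * (x * b)" using cen_comm[OF ac, of x] by (metis mult.assoc)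
        ultimately show "a * b * x = x * (a * b)" by (simp add: mult.assoc)
      qed
      have ab0: "a * b * cm x y = 0" for x y
      proof -
        have "a * b * cm x y = b * (a * cm x y)" using cen_comm[OF ac, of b] by (metis mult.assoc)
        thus ?thesis using a0 by simp
      qed
      show "a * b \<in> T" using ab ab0 unfolding T_def by simp
      show "b * a \<in> T" using ab ab0 cen_comm[OF ac, of b] unfolding T_def by simp
    qed
    have "T \<subseteq> center" unfolding T_def by blast
    hence T0: "T = {0}" using H Tid by blast
    have dd0: "d (d x) = 0" for x
    proof -
      have "d (d x) * cm y r = 0" for y r
      proof -
        have "d (d x * y) = d (d x) * y + d x * d y" by (rule Der_mul[OF alg d])
        hence "0 = cm (d (d x) * y) r + cm (d x * d y) r" using cm_cen[OF dc, of "d x * y" r]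
          by (simp add: cm_add)
        thus ?thesis using cm_cen_left[OF dc] cm_cen[OF cen_mult[OF dc dc]] by simp
      qed
      hence "d (d x) \<in> T" unfolding T_def using dc by simp
      thus ?thesis using T0 by simp
    qed
    show "d = (\<lambda>_. 0)"
    proof (rule ext)
      fix x
      have "d (d (x * x)) = d (d x) * x + (d x * d x + d x * d x) + x * d (d x)"
        by (simp add: Der_mul[OF alg d] Der_add[OF alg d] algebra_simps)
      hence "d x * d x + d x * d x = 0" using dd0 by simp
      hence xx: "d x * d x = 0" by (rule two_cancel[OF alg tt])
      show "d x = 0"
      proof (rule SP[OF alg sp])
        fix s
        have "d x * s = s * d x" by (rule cen_comm[OF dc])
        hence "d x * s * d x = s * (d x * d x)" by (simp add: mult.assoc)
        thus "d x * s * d x = 0" using xx by simp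
      qed
    qed
  qed
  show ?thesis using part1 part2 by simp
qed

end
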